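(* Let $(\Omega,\mathcal F,\mu)$ be a measure space, $p\in[1,\infty]$ and $k\ge1$. Then $\mathscr G_{p,k}$ is a closed subset of $L^p(\Omega,\mathcal F,\mu)$.
   Context: All measures are assumed not identically zero. $\mathscr G_{p,k}$ is the set of functions $\sum_{i=1}^l a_i\mathbf 1_{A_i}$ that belong to $L^p(\Omega,\mathcal F,\mu)$, with $l\le k$, $\{A_i\}$ a measurable partition of $\Omega$, $a_i\in\mathbb R$ (viewed as a subset of $L^p$, i.e. up to $\mu$-a.e. equality). *)

theory Defs
  imports "HOL-Analysis.Analysis" "HOL-Probability.Essential_Supremum"
begin

definition Lp_norm :: "'a measure \<Rightarrow> ennreal \<Rightarrow> ('a \<Rightarrow> real) \<Rightarrow> ennreal" where
  "Lp_norm M p f =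
     (if p = top then esssup M (\<lambda>x. ennreal \<bar>f x\<bar>)
      else (let I = (\<integral>\<^sup>+ x. ennreal (\<bar>f x\<bar> powr enn2real p) \<partial>M)
            in if I = top then top else ennreal (enn2real I powr (1 / enn2real p))))"

text \<open>Representatives of elements of L^p(M): measurable functions with finite p-norm.\<close>
definition Lp_space :: "'a measure \<Rightarrow> ennreal \<Rightarrow> ('a \<Rightarrow> real) set" where
  "Lp_space M p = {f \<in> borel_measurable M. Lp_norm M p f < top}"

definition G_set :: "'a measure \<Rightarrow> ennreal \<Rightarrow> nat \<Rightarrow> ('a \<Rightarrow> real) set" where
  "G_set M p k = {f \<in> Lp_space M p. \<exists>l A a. l \<le> k \<and>
      (\<forall>i<l. A i \<in> sets M) \<and>
      (\<forall>i<l. \<forall>j<l. i \<noteq> j \<longrightarrow> A i \<inter> A j = {}) \<and>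
      (\<Union>i<l. A i) = space M \<and>
      (AE x in M. f x = (\<Sum>i<l. a i * indicator (A i) x))}"

text \<open>Closedness of a set of (representatives of) elements of L^p, in the L^p norm topology
  (L^p is a metric space, so sequential closedness is closedness).\<close>
definition Lp_closed :: "'a measure \<Rightarrow> ennreal \<Rightarrow> ('a \<Rightarrow> real) set \<Rightarrow> bool" where
  "Lp_closed M p S \<longleftrightarrow> S \<subseteq> Lp_space M p \<and>
     (\<forall>fs f. (\<forall>n. fs n \<in> S) \<longrightarrow> f \<in> Lp_space M p \<longrightarrow>
        (\<lambda>n. Lp_norm M p (\<lambda>x. fs n x - f x)) \<longlonglongrightarrow> 0 \<longrightarrow> f \<in> S)"

end

theory Submission
  imports Defs
begin

lemma Lp_ae_subseq:
  assumes meas: "\<And>n. fs n \<in> borel_measurable M" and f: "f \<in> borel_measurable M"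
    and p: "1 \<le> p"
    and lim: "(\<lambda>n. Lp_norm M p (\<lambda>x. fs n x - f x)) \<longlonglongrightarrow> 0"
  shows "\<exists>r. AE x in M. (\<lambda>j. fs (r j) x) \<longlonglongrightarrow> f x"
proof (cases "p = top")
  case True
  define e where "e n = esssup M (\<lambda>x. ennreal \<bar>fs n x - f x\<bar>)" for n
  have e: "e \<longlonglongrightarrow> 0" using lim True unfolding e_def[abs_def] by (simp add: Lp_norm_def)
  have "AE x in M. \<forall>n. ennreal \<bar>fs n x - f x\<bar> \<le> e n"
    unfolding e_def by (intro AE_all_countable[THEN iffD2] allI esssup_AE)
  then have "AE x in M. (\<lambda>n. fs n x) \<longlonglongrightarrow> f x"
  proof eventually_elim
    case (elim x)
    have "(\<lambda>n. ennreal \<bar>fs n x - f x\<bar>) \<longlonglongrightarrow> 0"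
      by (rule tendsto_sandwich[OF _ _ tendsto_const e]) (use elim in auto)
    then have "(\<lambda>n. ennreal \<bar>fs n x - f x\<bar>) \<longlonglongrightarrow> ennreal 0" by simp
    then have "(\<lambda>n. \<bar>fs n x - f x\<bar>) \<longlonglongrightarrow> 0"
      by (rule tendsto_ennrealD) auto
    then show ?case by (simp add: tendsto_rabs_zero_iff LIM_zero_iff)
  qed
  then show ?thesis by (intro exI[of _ "\<lambda>j. j"]) simp
next
  case False
  define q where "q = enn2real p"
  have q1: "1 \<le> q" using enn2real_mono[OF p] False by (simp add: q_def top.not_eq_extremum)
  define I where "I n = (\<integral>\<^sup>+x. ennreal (\<bar>fs n x - f x\<bar> powr q) \<partial>M)" for n
  have norm: "Lp_norm M p (\<lambda>x. fs n x - f x) =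
     (if I n = top then top else ennreal (enn2real (I n) powr (1/q)))" for n
    using False by (simp add: Lp_norm_def I_def q_def Let_def)
  have "\<exists>n. I n \<le> ennreal ((1/2)^j)" for j
  proof -
    have pos: "0 < ennreal (((1/2)^j) powr (1/q))" using q1 by simp
    from order_tendstoD(2)[OF lim pos] obtain N where
      N: "\<forall>n\<ge>N. Lp_norm M p (\<lambda>x. fs n x - f x) < ennreal (((1/2)^j) powr (1/q))"
      unfolding eventually_sequentially by blast
    define n where "n = N"
    have n: "Lp_norm M p (\<lambda>x. fs n x - f x) < ennreal (((1/2)^j) powr (1/q))"
      using N n_def by blast
    then have nt: "I n \<noteq> top" using norm by (auto split: if_splits)
    then have lt: "enn2real (I n) powr (1/q) < ((1/2)^j) powr (1/q)" using n norm[of n]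
      by (simp add: ennreal_less_iff)
    have "enn2real (I n) < (1/2)^j"
    proof (rule ccontr)
      assume "\<not> enn2real (I n) < (1/2)^j"
      then have "((1/2)^j) powr (1/q) \<le> enn2real (I n) powr (1/q)"
        using q1 by (intro powr_mono2) auto
      then show False using lt by simp
    qed
    then have "ennreal (enn2real (I n)) \<le> ennreal ((1/2)^j)"
      by (intro ennreal_leI) simp
    then have "I n \<le> ennreal ((1/2)^j)" using nt by (simp add: ennreal_enn2real_if)
    then show ?thesis by blast
  qed
  then obtain r where r: "\<And>j. I (r j) \<le> ennreal ((1/2)^j)" by metis
  define G where "G x = (\<Sum>j. ennreal (\<bar>fs (r j) x - f x\<bar> powr q))" for x
  have mj: "(\<lambda>x. ennreal (\<bar>fs (r j) x - f x\<bar> powr q)) \<in> borel_measurable M" for j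
    using meas[of "r j"] f by measurable
  have "integral\<^sup>N M G = (\<Sum>j. I (r j))" unfolding G_def I_def by (rule nn_integral_suminf[OF mj])
  also have "\<dots> \<le> (\<Sum>j. ennreal ((1/2)^j))" by (intro suminf_le r) auto
  also have "\<dots> = ennreal 2"
    by (subst suminf_ennreal2) (auto simp: suminf_geometric summable_geometric)
  finally have "integral\<^sup>N M G \<noteq> top" by (auto simp: top_unique)
  moreover have Gm: "G \<in> borel_measurable M"
    unfolding G_def by (rule borel_measurable_suminf_order[OF mj])
  ultimately have "AE x in M. G x \<noteq> top"
    using nn_integral_noteq_infinite[OF Gm] by simp
  then have "AE x in M. (\<lambda>j. fs (r j) x) \<longlonglongrightarrow> f x"
  proof eventually_elim
    case (elim x)
    have "summable (\<lambda>j. \<bar>fs (r j) x - f x\<bar> powr q)"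
      using elim unfolding G_def by (intro summable_suminf_not_top) auto
    then have "(\<lambda>j. \<bar>fs (r j) x - f x\<bar> powr q) \<longlonglongrightarrow> 0" by (rule summable_LIMSEQ_zero)
    then have "(\<lambda>j. (\<bar>fs (r j) x - f x\<bar> powr q) powr (1/q)) \<longlonglongrightarrow> 0"
      by (rule tendsto_zero_powrI) (use q1 in auto)
    then have "(\<lambda>j. \<bar>fs (r j) x - f x\<bar>) \<longlonglongrightarrow> 0" using q1 by (simp add: powr_powr)
    then show ?case by (simp add: tendsto_rabs_zero_iff LIM_zero_iff)
  qed
  then show ?thesis by blast
qed


lemma step_val:
  fixes a :: "nat \<Rightarrow> real"
  assumes "x \<in> space M" "(\<Union>i<l. A i) = space M"
    and "\<forall>i<l. \<forall>j<l. i \<noteq> j \<longrightarrow> A i \<inter> A j = {}"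
  shows "(\<Sum>i<l. a i * indicator (A i) x) \<in> a ` {..<l}"
proof -
  obtain i0 where i0: "i0 < l" "x \<in> A i0" using assms(1,2) by blast
  have ind: "indicator (A i) x = (if i = i0 then 1 else (0::real))" if "i < l" for i
    using assms(3) i0 that by (auto simp: indicator_def)
  have "(\<Sum>i<l. a i * indicator (A i) x) = (\<Sum>i<l. if i = i0 then a i else 0)"
    by (intro sum.cong refl) (simp add: ind)
  also have "\<dots> = a i0" using i0 by simp
  finally show ?thesis using i0 by simp
qed

theorem corollary2p14:
  fixes M :: "'a measure" and p :: ennreal and k :: nat
  assumes "emeasure M (space M) \<noteq> 0"
    and "1 \<le> p"
    and "1 \<le> k"
  shows "Lp_closed M p (G_set M p k)"
proof -
  have sub: "G_set M p k \<subseteq> Lp_space M p" by (auto simp: G_set_def)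
  show ?thesis unfolding Lp_closed_def
  proof (intro conjI sub allI impI)
    fix fs f
    assume fsG: "\<forall>n. fs n \<in> G_set M p k" and fL: "f \<in> Lp_space M p"
      and lim: "(\<lambda>n. Lp_norm M p (\<lambda>x. fs n x - f x)) \<longlonglongrightarrow> 0"
    have meas: "fs n \<in> borel_measurable M" for n
      using fsG by (auto simp: G_set_def Lp_space_def)
    have fm[measurable]: "f \<in> borel_measurable M" using fL by (simp add: Lp_space_def)
    obtain r where r: "AE x in M. (\<lambda>j. fs (r j) x) \<longlonglongrightarrow> f x"
      using Lp_ae_subseq[OF meas fm assms(2) lim] by blast
    have "\<forall>m. \<exists>l A a. l \<le> k \<and> (\<forall>i<l. A i \<in> sets M) \<and>
      (\<forall>i<l. \<forall>j<l. i \<noteq> j \<longrightarrow> A i \<inter> A j = {}) \<and> (\<Union>i<l. A i) = space M \<and>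
      (AE x in M. fs m x = (\<Sum>i<l. a i * indicator (A i) x))"
      using fsG by (auto simp: G_set_def)
    then obtain L AA aa where LAA: "\<And>m. L m \<le> k \<and> (\<forall>i<L m. AA m i \<in> sets M) \<and>
      (\<forall>i<L m. \<forall>j<L m. i \<noteq> j \<longrightarrow> AA m i \<inter> AA m j = {}) \<and> (\<Union>i<L m. AA m i) = space M \<and>
      (AE x in M. fs m x = (\<Sum>i<L m. aa m i * indicator (AA m i) x))"
      unfolding choice_iff' choice_iff by blast
    have "AE x in M. \<forall>j. fs (r j) x = (\<Sum>i<L (r j). aa (r j) i * indicator (AA (r j) i) x)"
      using LAA by (intro AE_all_countable[THEN iffD2] allI) blast
    then have "AE x in M. \<forall>j. fs (r j) x \<in> aa (r j) ` {..<L (r j)}"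
    proof (rule AE_mp[OF _ AE_I2], intro impI allI)
      fix x j assume x: "x \<in> space M"
        and e: "\<forall>j. fs (r j) x = (\<Sum>i<L (r j). aa (r j) i * indicator (AA (r j) i) x)"
      show "fs (r j) x \<in> aa (r j) ` {..<L (r j)}"
        using step_val[OF x, where l="L (r j)" and A="AA (r j)" and a="aa (r j)"] LAA[of "r j"] e by auto
    qed
    with r have "AE x in M. (\<lambda>j. fs (r j) x) \<longlonglongrightarrow> f x \<and>
        (\<forall>j. fs (r j) x \<in> aa (r j) ` {..<L (r j)})"
      by eventually_elim auto
    then obtain N where N: "{x \<in> space M. \<not> ((\<lambda>j. fs (r j) x) \<longlonglongrightarrow> f x \<and>
        (\<forall>j. fs (r j) x \<in> aa (r j) ` {..<L (r j)}))} \<subseteq> N" "emeasure M N = 0" "N \<in> sets M"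
      by (rule AE_E)
    define G where "G = space M - N"
    have good: "(\<lambda>j. fs (r j) x) \<longlonglongrightarrow> f x \<and> (\<forall>j. fs (r j) x \<in> aa (r j) ` {..<L (r j)})"
      if "x \<in> G" for x
      using N(1) that by (auto simp: G_def)
    have cardW: "card W \<le> k" if W: "finite W" "W \<subseteq> f ` G" for W
    proof -
      have "\<forall>w\<in>W. \<exists>x\<in>G. f x = w" using W by blast
      then obtain xw where xw: "\<And>w. w \<in> W \<Longrightarrow> xw w \<in> G \<and> f (xw w) = w" by metis
      have "eventually (\<lambda>j. \<forall>w\<in>W. \<forall>w'\<in>W. w \<noteq> w' \<longrightarrow>
          \<bar>fs (r j) (xw w) - w\<bar> < \<bar>w - w'\<bar> / 2) sequentially"
      proof (intro eventually_ball_finite W(1) ballI impI)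
        fix w w' assume w: "w \<in> W" and w': "w' \<in> W"
        have lw: "(\<lambda>j. fs (r j) (xw w)) \<longlonglongrightarrow> w" using good xw[OF w] by metis
        have "eventually (\<lambda>j. w \<noteq> w' \<longrightarrow> \<bar>fs (r j) (xw w) - w\<bar> < \<bar>w - w'\<bar> / 2) sequentially"
        proof (cases "w = w'")
          case False
          then have "\<bar>w - w'\<bar> / 2 > 0" by simp
          from lw[unfolded tendsto_iff, rule_format, OF this]
          show ?thesis by eventually_elim (simp add: dist_real_def)
        qed simp
        then show "eventually (\<lambda>j. w \<noteq> w' \<longrightarrow> \<bar>fs (r j) (xw w) - w\<bar> < \<bar>w - w'\<bar> / 2) sequentially" .
      qed
      then obtain j where j: "\<forall>w\<in>W. \<forall>w'\<in>W. w \<noteq> w' \<longrightarrow> \<bar>fs (r j) (xw w) - w\<bar> < \<bar>w - w'\<bar> / 2"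
        unfolding eventually_sequentially by blast
      define g where "g w = fs (r j) (xw w)" for w
      have inj: "inj_on g W"
      proof (rule inj_onI, rule ccontr)
        fix w w' assume w: "w \<in> W" "w' \<in> W" "g w = g w'" "w \<noteq> w'"
        then have "\<bar>g w - w\<bar> < \<bar>w - w'\<bar> / 2" "\<bar>g w' - w'\<bar> < \<bar>w' - w\<bar> / 2"
          using j by (auto simp: g_def)
        then show False using w(3) by (simp add: abs_minus_commute) (smt (verit) abs_triangle_ineq4 abs_minus_commute)
      qed
      have sub: "g ` W \<subseteq> aa (r j) ` {..<L (r j)}" using good xw by (auto simp: g_def)
      have "card W = card (g ` W)" using inj by (simp add: card_image)
      also have "\<dots> \<le> card (aa (r j) ` {..<L (r j)})" using sub by (intro card_mono) auto
      also have "\<dots> \<le> card {..<L (r j)}" by (rule card_image_le) simp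
      also have "\<dots> \<le> k" using LAA[of "r j"] by simp
      finally show ?thesis .
    qed
    have finV: "finite (f ` G)"
    proof (rule ccontr)
      assume "infinite (f ` G)"
      then obtain W where "finite W" "card W = Suc k" "W \<subseteq> f ` G"
        using infinite_arbitrarily_large by blast
      then show False using cardW by fastforce
    qed
    have cardV: "card (f ` G) \<le> k" using cardW[OF finV] by simp
    have Gne: "G \<noteq> {}"
    proof
      assume "G = {}"
      then have "space M \<subseteq> N" by (auto simp: G_def)
      then have "emeasure M (space M) \<le> emeasure M N" using N(3) by (intro emeasure_mono) auto
      then show False using N(2) assms(1) by simp
    qed
    define m where "m = card (f ` G)"
    obtain h where h: "bij_betw h {0..<m} (f ` G)"
      using ex_bij_betw_nat_finite[OF finV] m_def by auto
    have m1: "0 < m" using Gne finV by (simp add: m_def card_gt_0_iff)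
    have hinj: "\<And>i j. i < m \<Longrightarrow> j < m \<Longrightarrow> h i = h j \<Longrightarrow> i = j"
      using h by (auto simp: bij_betw_def inj_on_def)
    have himg: "h ` {..<m} = f ` G" using h by (simp add: bij_betw_def atLeast0LessThan)
    define A where "A i = ({x \<in> space M. f x = h i} - N) \<union> (if i = 0 then space M \<inter> N else {})" for i
    have AG: "x \<in> A i \<longleftrightarrow> (x \<in> G \<and> f x = h i) \<or> (i = 0 \<and> x \<in> space M \<inter> N)" for x i
      by (auto simp: A_def G_def)
    show "f \<in> G_set M p k"
      unfolding G_set_def
    proof (intro CollectI conjI fL exI[of _ m] exI[of _ A] exI[of _ h])
      show "m \<le> k" using cardV m_def by simp
      show "\<forall>i<m. A i \<in> sets M"
      proof (intro allI impI)
        fix i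
        have "{x \<in> space M. f x = h i} \<in> sets M" by measurable
        then show "A i \<in> sets M" unfolding A_def using N(3) by auto
      qed
      show "\<forall>i<m. \<forall>j<m. i \<noteq> j \<longrightarrow> A i \<inter> A j = {}"
        using hinj by (auto simp: AG G_def)
      show "(\<Union>i<m. A i) = space M"
      proof
        show "(\<Union>i<m. A i) \<subseteq> space M" by (auto simp: A_def split: if_splits)
        show "space M \<subseteq> (\<Union>i<m. A i)"
        proof
          fix x assume x: "x \<in> space M"
          show "x \<in> (\<Union>i<m. A i)"
          proof (cases "x \<in> N")
            case True then show ?thesis using x m1 by (auto simp: AG)
          next
            case False
            then have "x \<in> G" using x by (simp add: G_def)
            then have "f x \<in> h ` {..<m}" using himg by auto
            then obtain i where "i < m" "f x = h i" by auto
            then show ?thesis using \<open>x \<in> G\<close> by (auto simp: AG)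
          qed
        qed
      qed
      show "AE x in M. f x = (\<Sum>i<m. h i * indicator (A i) x)"
      proof (rule AE_I')
        show "N \<in> null_sets M" using N by auto
        show "{x \<in> space M. f x \<noteq> (\<Sum>i<m. h i * indicator (A i) x)} \<subseteq> N"
        proof (rule subsetI, rule ccontr)
          fix x assume x: "x \<in> {x \<in> space M. f x \<noteq> (\<Sum>i<m. h i * indicator (A i) x)}"
            and xN: "x \<notin> N"
          then have xG: "x \<in> G" by (simp add: G_def)
          then have "f x \<in> h ` {..<m}" using himg by auto
          then obtain i0 where i0: "i0 < m" "f x = h i0" by auto
          have ind: "indicator (A i) x = (if i = i0 then 1 else (0::real))" if "i < m" for i
            using hinj[OF that i0(1)] i0 xG xN by (auto simp: indicator_def AG)
          have "(\<Sum>i<m. h i * indicator (A i) x) = (\<Sum>i<m. if i = i0 then h i else 0)"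
            by (intro sum.cong refl) (simp add: ind)
          also have "\<dots> = f x" using i0 by simp
          finally show False using x by simp
        qed
      qed
    qed
  qed
qed

end
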